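(* Let $\mathcal{M}=\langle W,V\rangle$ be a model, $X\subseteq W$ an information state, and $q,p_1,\dots,p_n$ propositional variables. Then $q$ depends on $p_1,\dots,p_n$ in $X$ if and only if, for any $w\in W$, $$\mathcal{M},w,X\vDash \Big(\bigwedge_{1\leq i\leq n}(\Box p_i\vee\Box\neg p_i)\Big)\Rightarrow(\Box q\vee\Box\neg q)$$ according to the Kolodny–MacFarlane semantics.
   Context: Formulas are built by $\varphi::= p\mid \neg\varphi\mid (\varphi\wedge\varphi)\mid \Box\varphi \mid (\varphi\Rightarrow\varphi)$, with $\vee$ defined as usual. A model is $\mathcal{M}=\langle W,V\rangle$ with $W$ nonempty and $V$ assigning each propositional variable a subset of $W$. The Kolodny–MacFarlane semantics evaluates at $\mathcal{M},w,X$ with $w\in W$, $X\subseteq W$: $\mathcal{M},w,X\vDash p$ iff $w\in V(p)$; $\neg,\wedge$ Boolean; $\mathcal{M},w,X\vDash\Box\varphi$ iff $\mathcal{M},v,X\vDash\varphi$ for all $v\in X$; $\mathcal{M},w,X\vDash\varphi\Rightarrow\psi$ iff $\mathcal{M},w,X'\vDash\Box\psi$ for every $X'$ such that (i) $X'\subseteq X$, (ii) $X'\subseteq\llbracket\varphi\rrbracket^{\mathcal{M},X'}$, and (iii) there is no $X''$ satisfying (i) and (ii) with $X'\subsetneq X''$; here $\llbracket\varphi\rrbracket^{\mathcal{M},Y}=\{v\in Y\mid\mathcal{M},v,Y\vDash\varphi\}$. In an information state $X$, $q$ depends on $p_1,\dots,p_n$ iff any two worlds in $X$ that agree on the truth values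 of $p_1,\dots,p_n$ also agree on the truth value of $q$. *)

theory Defs
  imports Main
begin

datatype 'a fm =
    Var 'a
  | Neg "'a fm"
  | And "'a fm" "'a fm"
  | Box "'a fm"
  | Cond "'a fm" "'a fm"

definition Or :: "'a fm \<Rightarrow> 'a fm \<Rightarrow> 'a fm" where
  "Or \<phi> \<psi> = Neg (And (Neg \<phi>) (Neg \<psi>))"

(* Kolodny--MacFarlane semantics; a model is <W, V>, only V matters for evaluation.
   sat V w X \<phi>  means  M, w, X |= \<phi>. *)
primrec sat :: "('a \<Rightarrow> 'w set) \<Rightarrow> 'w \<Rightarrow> 'w set \<Rightarrow> 'a fm \<Rightarrow> bool" where
  "sat V w X (Var p) = (w \<in> V p)"
| "sat V w X (Neg \<phi>) = (\<not> sat V w X \<phi>)"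
| "sat V w X (And \<phi> \<psi>) = (sat V w X \<phi> \<and> sat V w X \<psi>)"
| "sat V w X (Box \<phi>) = (\<forall>v\<in>X. sat V v X \<phi>)"
| "sat V w X (Cond \<phi> \<psi>) =
     (\<forall>X'. (X' \<subseteq> X \<and> X' \<subseteq> {v \<in> X'. sat V v X' \<phi>}
            \<and> \<not> (\<exists>X''. X'' \<subseteq> X \<and> X'' \<subseteq> {v \<in> X''. sat V v X'' \<phi>} \<and> X' \<subset> X''))
          \<longrightarrow> (\<forall>v\<in>X'. sat V v X' \<psi>))"

definition Top :: "'a fm" where
  "Top = Neg (And (Var undefined) (Neg (Var undefined)))"

fun BigAnd :: "'a fm list \<Rightarrow> 'a fm" where
  "BigAnd [] = Top"
| "BigAnd [\<phi>] = \<phi>"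
| "BigAnd (\<phi> # \<psi> # \<chi>s) = And \<phi> (BigAnd (\<psi> # \<chi>s))"

definition depends :: "('a \<Rightarrow> 'w set) \<Rightarrow> 'w set \<Rightarrow> 'a \<Rightarrow> 'a list \<Rightarrow> bool" where
  "depends V X q ps =
     (\<forall>w\<in>X. \<forall>v\<in>X. (\<forall>p\<in>set ps. (w \<in> V p \<longleftrightarrow> v \<in> V p)) \<longrightarrow> (w \<in> V q \<longleftrightarrow> v \<in> V q))"

definition decided :: "'a \<Rightarrow> 'a fm" where
  "decided p = Or (Box (Var p)) (Box (Neg (Var p)))"

end

theory Submission
  imports Defs
begin

lemma sat_BigAnd_dec:
  "sat V v Y (BigAnd (map decided ps)) \<longleftrightarrow>
   (\<forall>p\<in>set ps. (\<forall>u\<in>Y. u \<in> V p) \<or> (\<forall>u\<in>Y. u \<notin> V p))"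
proof (induction ps)
  case Nil then show ?case by (simp add: Top_def)
next
  case (Cons a ps)
  then show ?case by (cases ps) (auto simp: decided_def Or_def)
qed

lemma sat_dec: "sat V v Y (decided q) \<longleftrightarrow> (\<forall>u\<in>Y. u \<in> V q) \<or> (\<forall>u\<in>Y. u \<notin> V q)"
  by (auto simp: decided_def Or_def)

theorem proposition11:
  fixes W :: "'w set" and V :: "'a \<Rightarrow> 'w set" and X :: "'w set"
    and q :: 'a and ps :: "'a list"
  assumes "W \<noteq> {}" and "\<forall>p. V p \<subseteq> W" and "X \<subseteq> W"
  shows "depends V X q ps \<longleftrightarrow>
         (\<forall>w\<in>W. sat V w X (Cond (BigAnd (map decided ps)) (decided q)))"
proof
  assume dep: "depends V X q ps"
  show "\<forall>w\<in>W. sat V w X (Cond (BigAnd (map decided ps)) (decided q))"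
  proof (intro ballI)
    fix w
    show "sat V w X (Cond (BigAnd (map decided ps)) (decided q))"
      unfolding sat.simps
    proof (intro allI impI ballI)
    fix X' v
    assume h: "X' \<subseteq> X \<and> X' \<subseteq> {v \<in> X'. sat V v X' (BigAnd (map decided ps))} \<and>
      \<not> (\<exists>X''. X'' \<subseteq> X \<and> X'' \<subseteq> {v \<in> X''. sat V v X'' (BigAnd (map decided ps))} \<and> X' \<subset> X'')"
      and v: "v \<in> X'"
    have "v \<in> {v \<in> X'. sat V v X' (BigAnd (map decided ps))}" using h v by (meson subsetD)
    then have "sat V v X' (BigAnd (map decided ps))" by simp
    then have D: "\<forall>p\<in>set ps. (\<forall>u\<in>X'. u \<in> V p) \<or> (\<forall>u\<in>X'. u \<notin> V p)"
      by (simp only: sat_BigAnd_dec)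
    have sub: "X' \<subseteq> X" using h by simp
    have "\<forall>u\<in>X'. u \<in> V q \<longleftrightarrow> v \<in> V q"
    proof
      fix u assume u: "u \<in> X'"
      have "\<forall>p\<in>set ps. u \<in> V p \<longleftrightarrow> v \<in> V p" using D u v by metis
      moreover have "u \<in> X" "v \<in> X" using sub u v by auto
      moreover have "\<forall>w\<in>X. \<forall>v\<in>X. (\<forall>p\<in>set ps. (w \<in> V p \<longleftrightarrow> v \<in> V p)) \<longrightarrow> (w \<in> V q \<longleftrightarrow> v \<in> V q)"
        using dep unfolding depends_def .
      ultimately show "u \<in> V q \<longleftrightarrow> v \<in> V q" by blast
    qed
    then show "sat V v X' (decided q)" unfolding sat_dec by (cases "v \<in> V q") auto
    qed
  qed
next
  assume R: "\<forall>w\<in>W. sat V w X (Cond (BigAnd (map decided ps)) (decided q))"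
  obtain w0 where w0: "w0 \<in> W" using assms(1) by blast
  show "depends V X q ps" unfolding depends_def
  proof (intro ballI impI)
    fix w v assume w: "w \<in> X" and v: "v \<in> X" and ag: "\<forall>p\<in>set ps. (w \<in> V p) = (v \<in> V p)"
    define X' where "X' = {u\<in>X. \<forall>p\<in>set ps. u \<in> V p \<longleftrightarrow> w \<in> V p}"
    have wX': "w \<in> X'" and vX': "v \<in> X'" using w v ag by (auto simp: X'_def)
    have sub: "X' \<subseteq> X" by (auto simp: X'_def)
    have good: "X' \<subseteq> {u \<in> X'. sat V u X' (BigAnd (map decided ps))}"
    proof
      fix u assume u: "u \<in> X'"
      have "\<forall>p\<in>set ps. (\<forall>u\<in>X'. u \<in> V p) \<or> (\<forall>u\<in>X'. u \<notin> V p)"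
      proof
        fix p assume "p \<in> set ps"
        then show "(\<forall>u\<in>X'. u \<in> V p) \<or> (\<forall>u\<in>X'. u \<notin> V p)"
          by (cases "w \<in> V p") (auto simp: X'_def)
      qed
      then show "u \<in> {u \<in> X'. sat V u X' (BigAnd (map decided ps))}" using u
        by (simp only: sat_BigAnd_dec mem_Collect_eq)
    qed
    have max: "\<not> (\<exists>X''. X'' \<subseteq> X \<and> X'' \<subseteq> {u \<in> X''. sat V u X'' (BigAnd (map decided ps))} \<and> X' \<subset> X'')"
    proof
      assume "\<exists>X''. X'' \<subseteq> X \<and> X'' \<subseteq> {u \<in> X''. sat V u X'' (BigAnd (map decided ps))} \<and> X' \<subset> X''"
      then obtain X'' where a: "X'' \<subseteq> X" and b: "X'' \<subseteq> {u \<in> X''. sat V u X'' (BigAnd (map decided ps))}"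
        and c: "X' \<subset> X''" by blast
      have wX'': "w \<in> X''" using c wX' by blast
      have "w \<in> {u \<in> X''. sat V u X'' (BigAnd (map decided ps))}" using b wX'' by (rule subsetD)
      then have "sat V w X'' (BigAnd (map decided ps))" by simp
      then have D: "\<forall>p\<in>set ps. (\<forall>u\<in>X''. u \<in> V p) \<or> (\<forall>u\<in>X''. u \<notin> V p)"
        by (simp only: sat_BigAnd_dec)
      have "X'' \<subseteq> X'"
      proof
        fix u assume u: "u \<in> X''"
        have "\<forall>p\<in>set ps. u \<in> V p \<longleftrightarrow> w \<in> V p"
        proof
          fix p assume "p \<in> set ps"
          then have "(\<forall>u\<in>X''. u \<in> V p) \<or> (\<forall>u\<in>X''. u \<notin> V p)" using D by simp
          then show "u \<in> V p \<longleftrightarrow> w \<in> V p" using u wX'' by auto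
        qed
        moreover have "u \<in> X" using a u by auto
        ultimately show "u \<in> X'" unfolding X'_def by simp
      qed
      then show False using c by blast
    qed
    have "sat V w0 X (Cond (BigAnd (map decided ps)) (decided q))" using R w0 by blast
    then have "\<forall>u\<in>X'. sat V u X' (decided q)" unfolding sat.simps using sub good max by (meson)
    then have "sat V w X' (decided q)" using wX' by blast
    then show "(w \<in> V q) = (v \<in> V q)" unfolding sat_dec using wX' vX' by auto
  qed
qed

end
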